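(* In the staggered-adoption setting described in the context, suppose: (i) $\{Y_{it}(a,e),E_i,A_{it}\}_{t=1}^T$ are i.i.d. across $i$ for $(a,e)\in\{0,1\}\times\{1,\dots,T,\infty\}$; (ii) $Y_{it}(0,e)=Y_{it}(0,e')$ for $t<\min\{e,e'\}$; (iii) for all $t_1\ne t_2$ and all $e$, $\mathbb{E}[g(Y_{it_1}(0,\infty))-g(Y_{it_2}(0,\infty))\mid E_i=e]=\mathbb{E}[g(Y_{it_1}(0,\infty))-g(Y_{it_2}(0,\infty))\mid E_i=\infty]$; (iv) $0\le h(e,s)\le\pi(e,s)$; (v) $|\tau_g(e,s)|\le|\mu_g(e,t)|$. Fix a finite treatment date $e$, a post-treatment period $t\ge e$ and a chosen period $s<e$. Then $\mu_g(e,t)$ is partially identified via \[\mu_g(e,t)\in m_g(e,s,t)\left[\min\left\{1,\frac{1}{1-\operatorname{sgn}(\tau_g(e,s)\mu_g(e,t))\pi(e,s)}\right\},\ \max\left\{1,\frac{1}{1-\operatorname{sgn}(\tau_g(e,s)\mu_g(e,t))\pi(e,s)}\right\}\right],\] i.e. $\mu_g(e,t)=m_g(e,s,t)\,c$ for some $c$ in the displayed interval, where $m_g(e,s,t)=\mathbb{E}[g(Y_{it})-g(Y_{is})\mid E_i=e]-\mathbb{E}[g(Y_{it})-g(Y_{is})\mid E_i=\infty]$.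
   Context: Periods $t\in\{1,\dots,T\}$, units $i=1,\dots,n$. $E_i\in\{1,\dots,T,\infty\}$ is the date at which unit $i$ is first treated (staggered adoption: once treated, always treated), with $E_i=\infty$ meaning never treated. $A_{it}\in\{0,1\}$ is the unobserved anticipation status of unit $i$ in period $t$. Potential outcomes $Y_{it}(a,e)$; anticipation only matters before treatment of eventually-treated units, i.e. $Y_{it}(1,e)=Y_{it}(0,e)$ whenever $t\ge e$ or $e=\infty$. Observed outcome $Y_{it}=Y_{it}(A_{it},E_i)$. $g$ is a known measurable real function with finite expectations. Define $\mu_g(e,t)=\mathbb{E}[g(Y_{it}(0,e))-g(Y_{it}(0,\infty))\mid E_i=e]$, $h(e,s)=\mathbb{P}[A_{is}=1\mid E_i=e]$, and the anticipatory effect $\tau_g(e,s)=\mathbb{E}[g(Y_{is}(1,e))-g(Y_{is}(0,e))\mid E_i=e,A_{is}=1]$. $\pi(e,s)\in(0,1)$ is a given bound. $\operatorname{sgn}$ is the sign function. *)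

theory Defs
  imports "HOL-Probability.Probability" "HOL-Library.Extended_Nat"
begin

text \<open>Treatment dates take values in {1..T} \<union> {\<infinity>}; we use enat, with \<infinity> = never treated.
  Anticipation status a \<in> {0,1} is rendered as bool (False = 0, True = 1).
  Potential outcomes: Y i t a e \<omega> = Y_it(a,e) at sample point \<omega>.\<close>

definition Edom :: "nat \<Rightarrow> enat set" where
  "Edom T = enat ` {1..T} \<union> {\<infinity>}"

definition cexp :: "'w measure \<Rightarrow> ('w \<Rightarrow> real) \<Rightarrow> 'w set \<Rightarrow> real" where
  "cexp M X P = (\<integral>\<omega>. X \<omega> * indicator P \<omega> \<partial>M) / measure M P"

definition obsY :: "(nat \<Rightarrow> nat \<Rightarrow> bool \<Rightarrow> enat \<Rightarrow> 'w \<Rightarrow> real) \<Rightarrow> (nat \<Rightarrow> 'w \<Rightarrow> enat)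
    \<Rightarrow> (nat \<Rightarrow> nat \<Rightarrow> 'w \<Rightarrow> bool) \<Rightarrow> nat \<Rightarrow> nat \<Rightarrow> 'w \<Rightarrow> real" where
  "obsY Y E A i t \<omega> = Y i t (A i t \<omega>) (E i \<omega>) \<omega>"

definition evE :: "'w measure \<Rightarrow> (nat \<Rightarrow> 'w \<Rightarrow> enat) \<Rightarrow> nat \<Rightarrow> enat \<Rightarrow> 'w set" where
  "evE M E i e = {\<omega> \<in> space M. E i \<omega> = e}"

definition mu_g where
  "mu_g M g Y E i e t =
     cexp M (\<lambda>\<omega>. g (Y i t False e \<omega>) - g (Y i t False \<infinity> \<omega>)) (evE M E i e)"

definition h_ant where
  "h_ant M E A i e s =
     measure M {\<omega> \<in> space M. A i s \<omega> \<and> E i \<omega> = e} / measure M (evE M E i e)"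

definition tau_g where
  "tau_g M g Y E A i e s =
     cexp M (\<lambda>\<omega>. g (Y i s True e \<omega>) - g (Y i s False e \<omega>))
       {\<omega> \<in> space M. E i \<omega> = e \<and> A i s \<omega>}"

definition m_g where
  "m_g M g Y E A i e s t =
     cexp M (\<lambda>\<omega>. g (obsY Y E A i t \<omega>) - g (obsY Y E A i s \<omega>)) (evE M E i e)
   - cexp M (\<lambda>\<omega>. g (obsY Y E A i t \<omega>) - g (obsY Y E A i s \<omega>)) (evE M E i \<infinity>)"

text \<open>The per-unit data {Y_it(a,e), E_i, A_it}_{t=1..T}, (a,e) \<in> {0,1} \<times> ({1..T} \<union> {\<infinity>}),
  as one random element, and the measurable space it lives in.\<close>
definition unit_data where
  "unit_data T Y E A i \<omega> =
     (restrict (\<lambda>(t, a, e). Y i t a e \<omega>) ({1..T} \<times> UNIV \<times> Edom T),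
      E i \<omega>,
      restrict (\<lambda>t. A i t \<omega>) {1..T})"

definition unit_space :: "nat \<Rightarrow> ((nat \<times> bool \<times> enat \<Rightarrow> real) \<times> enat \<times> (nat \<Rightarrow> bool)) measure" where
  "unit_space T =
     (\<Pi>\<^sub>M _ \<in> {1..T} \<times> UNIV \<times> Edom T. borel) \<Otimes>\<^sub>M
       (count_space UNIV \<Otimes>\<^sub>M (\<Pi>\<^sub>M _ \<in> {1..T}. count_space UNIV))"

end

theory Submission
  imports Defs
begin

theorem theoremA1:
  fixes M :: "'w measure"
    and T n :: nat
    and Y :: "nat \<Rightarrow> nat \<Rightarrow> bool \<Rightarrow> enat \<Rightarrow> 'w \<Rightarrow> real"
    and E :: "nat \<Rightarrow> 'w \<Rightarrow> enat"
    and A :: "nat \<Rightarrow> nat \<Rightarrow> 'w \<Rightarrow> bool"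
    and g :: "real \<Rightarrow> real"
    and \<pi> :: "nat \<Rightarrow> nat \<Rightarrow> real"
    and i e s t :: nat
  assumes M: "prob_space M"
    (* random variables *)
    and Y_meas: "\<And>i t a e. i \<in> {1..n} \<Longrightarrow> t \<in> {1..T} \<Longrightarrow> e \<in> Edom T \<Longrightarrow>
                   Y i t a e \<in> borel_measurable M"
    and E_meas: "\<And>i. i \<in> {1..n} \<Longrightarrow> E i \<in> measurable M (count_space UNIV)"
    and A_meas: "\<And>i t. i \<in> {1..n} \<Longrightarrow> t \<in> {1..T} \<Longrightarrow> A i t \<in> measurable M (count_space UNIV)"
    and E_range: "\<And>i \<omega>. i \<in> {1..n} \<Longrightarrow> \<omega> \<in> space M \<Longrightarrow> E i \<omega> \<in> Edom T"
    (* staggered adoption / anticipation only before treatment *)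
    and no_ant: "\<And>i t e \<omega>. i \<in> {1..n} \<Longrightarrow> t \<in> {1..T} \<Longrightarrow> e \<in> Edom T \<Longrightarrow> \<omega> \<in> space M \<Longrightarrow>
                   (enat t \<ge> e \<or> e = \<infinity>) \<Longrightarrow> Y i t True e \<omega> = Y i t False e \<omega>"
    (* g known measurable with finite expectations *)
    and g_meas: "g \<in> borel_measurable borel"
    and g_int: "\<And>i t a e. i \<in> {1..n} \<Longrightarrow> t \<in> {1..T} \<Longrightarrow> e \<in> Edom T \<Longrightarrow>
                   integrable M (\<lambda>\<omega>. g (Y i t a e \<omega>))"
    and g_int_obs: "\<And>i t. i \<in> {1..n} \<Longrightarrow> t \<in> {1..T} \<Longrightarrow>
                   integrable M (\<lambda>\<omega>. g (obsY Y E A i t \<omega>))"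
    (* (i) i.i.d. across units *)
    and iid_indep: "prob_space.indep_vars M (\<lambda>_. unit_space T) (unit_data T Y E A) {1..n}"
    and iid_ident: "\<And>i j. i \<in> {1..n} \<Longrightarrow> j \<in> {1..n} \<Longrightarrow>
                   distr M (unit_space T) (unit_data T Y E A i) = distr M (unit_space T) (unit_data T Y E A j)"
    (* (ii) *)
    and no_ant_before: "\<And>i t e e' \<omega>. i \<in> {1..n} \<Longrightarrow> t \<in> {1..T} \<Longrightarrow> e \<in> Edom T \<Longrightarrow> e' \<in> Edom T \<Longrightarrow>
                   \<omega> \<in> space M \<Longrightarrow> enat t < min e e' \<Longrightarrow> Y i t False e \<omega> = Y i t False e' \<omega>"
    (* (iii) parallel trends *)
    and par_trends: "\<And>i t1 t2 e. i \<in> {1..n} \<Longrightarrow> t1 \<in> {1..T} \<Longrightarrow> t2 \<in> {1..T} \<Longrightarrow> t1 \<noteq> t2 \<Longrightarrow>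
                   e \<in> Edom T \<Longrightarrow>
                   cexp M (\<lambda>\<omega>. g (Y i t1 False \<infinity> \<omega>) - g (Y i t2 False \<infinity> \<omega>)) (evE M E i e)
                 = cexp M (\<lambda>\<omega>. g (Y i t1 False \<infinity> \<omega>) - g (Y i t2 False \<infinity> \<omega>)) (evE M E i \<infinity>)"
    (* fixed unit, dates and periods *)
    and i: "i \<in> {1..n}"
    and e: "e \<in> {1..T}"
    and t: "t \<in> {1..T}" "e \<le> t"
    and s: "s \<in> {1..T}" "s < e"
    and pi_bd: "0 < \<pi> e s" "\<pi> e s < 1"
    (* (iv) *)
    and iv: "0 \<le> h_ant M E A i (enat e) s" "h_ant M E A i (enat e) s \<le> \<pi> e s"
    (* (v) *)
    and v: "\<bar>tau_g M g Y E A i (enat e) s\<bar> \<le> \<bar>mu_g M g Y E i (enat e) t\<bar>"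
  shows "\<exists>c. min 1 (1 / (1 - sgn (tau_g M g Y E A i (enat e) s * mu_g M g Y E i (enat e) t) * \<pi> e s)) \<le> c
           \<and> c \<le> max 1 (1 / (1 - sgn (tau_g M g Y E A i (enat e) s * mu_g M g Y E i (enat e) t) * \<pi> e s))
           \<and> mu_g M g Y E i (enat e) t = m_g M g Y E A i (enat e) s t * c"
proof -
  interpret prob_space M by (rule M)
  let ?mu = "mu_g M g Y E i (enat e) t"
  let ?tau = "tau_g M g Y E A i (enat e) s"
  let ?h = "h_ant M E A i (enat e) s"
  let ?p = "\<pi> e s"
  define Pe where "Pe = evE M E i (enat e)"
  define Pi where "Pi = evE M E i \<infinity>"
  define EA where "EA = {\<omega> \<in> space M. E i \<omega> = enat e \<and> A i s \<omega>}"
  define As where "As = {\<omega> \<in> space M. A i s \<omega>}"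
  define D1 where "D1 = (\<lambda>\<omega>. g (Y i t False (enat e) \<omega>) - g (Y i t False \<infinity> \<omega>))"
  define D2 where "D2 = (\<lambda>\<omega>. g (Y i t False \<infinity> \<omega>) - g (Y i s False \<infinity> \<omega>))"
  define Dl where "Dl = (\<lambda>\<omega>. g (Y i s True (enat e) \<omega>) - g (Y i s False (enat e) \<omega>))"
  define X where "X = (\<lambda>\<omega>. g (obsY Y E A i t \<omega>) - g (obsY Y E A i s \<omega>))"
  have eD: "enat e \<in> Edom T" using e by (auto simp: Edom_def)
  have iD: "\<infinity> \<in> Edom T" by (auto simp: Edom_def)
  have tne: "t \<noteq> s" using t s by auto
  have Pe_sets: "Pe \<in> sets M"
  proof -
    have "Pe = E i -` {enat e} \<inter> space M" by (auto simp: Pe_def evE_def)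
    then show ?thesis using measurable_sets[OF E_meas[OF i], of "{enat e}"] by simp
  qed
  have As_sets: "As \<in> sets M"
  proof -
    have "As = A i s -` {True} \<inter> space M" by (auto simp: As_def)
    then show ?thesis using measurable_sets[OF A_meas[OF i s(1)], of "{True}"] by simp
  qed
  have EA_eq: "EA = Pe \<inter> As" by (auto simp: EA_def Pe_def As_def evE_def)
  have EA_sets: "EA \<in> sets M" using EA_eq Pe_sets As_sets by auto
  have intD1: "integrable M D1" unfolding D1_def using g_int i t(1) eD iD by auto
  have intD2: "integrable M D2" unfolding D2_def using g_int i t(1) s(1) iD by auto
  have intDl: "integrable M Dl" unfolding Dl_def using g_int i s(1) eD by auto
  have intDlA: "integrable M (\<lambda>\<omega>. Dl \<omega> * indicator As \<omega>)"
    using integrable_real_mult_indicator[OF As_sets intDl] .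
  have i1: "integrable M (\<lambda>\<omega>. D1 \<omega> * indicator Pe \<omega>)"
    using integrable_real_mult_indicator[OF Pe_sets intD1] .
  have i2: "integrable M (\<lambda>\<omega>. D2 \<omega> * indicator Pe \<omega>)"
    using integrable_real_mult_indicator[OF Pe_sets intD2] .
  have i3: "integrable M (\<lambda>\<omega>. Dl \<omega> * indicator EA \<omega>)"
    using integrable_real_mult_indicator[OF EA_sets intDl] .
  have ptw: "X \<omega> * indicator Pe \<omega> = D1 \<omega> * indicator Pe \<omega> + D2 \<omega> * indicator Pe \<omega>
      - Dl \<omega> * indicator EA \<omega>" if w: "\<omega> \<in> space M" for \<omega>
  proof (cases "E i \<omega> = enat e")
    case True
    have a: "Y i t (A i t \<omega>) (enat e) \<omega> = Y i t False (enat e) \<omega>"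
      using no_ant[OF i t(1) eD w] t(2) by (cases "A i t \<omega>") auto
    have b: "Y i s False (enat e) \<omega> = Y i s False \<infinity> \<omega>"
      using no_ant_before[OF i s(1) eD iD w] s(2) by simp
    show ?thesis using True w a b
      by (cases "A i s \<omega>") (auto simp: X_def D1_def D2_def Dl_def obsY_def Pe_def evE_def EA_def)
  next
    case False
    then show ?thesis by (auto simp: Pe_def evE_def EA_def)
  qed
  have ptw2: "X \<omega> * indicator Pi \<omega> = D2 \<omega> * indicator Pi \<omega>" if w: "\<omega> \<in> space M" for \<omega>
  proof (cases "E i \<omega> = \<infinity>")
    case True
    have a: "Y i t (A i t \<omega>) \<infinity> \<omega> = Y i t False \<infinity> \<omega>"
      using no_ant[OF i t(1) iD w] by (cases "A i t \<omega>") auto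
    have b: "Y i s (A i s \<omega>) \<infinity> \<omega> = Y i s False \<infinity> \<omega>"
      using no_ant[OF i s(1) iD w] by (cases "A i s \<omega>") auto
    show ?thesis using True a b by (simp add: X_def D2_def obsY_def)
  next
    case False
    then show ?thesis by (auto simp: Pi_def evE_def)
  qed
  have cPe: "cexp M X Pe = cexp M D1 Pe + cexp M D2 Pe
      - (\<integral>\<omega>. Dl \<omega> * indicator EA \<omega> \<partial>M) / measure M Pe"
  proof -
    have "(\<integral>\<omega>. X \<omega> * indicator Pe \<omega> \<partial>M) = (\<integral>\<omega>. D1 \<omega> * indicator Pe \<omega> + D2 \<omega> * indicator Pe \<omega>
      - Dl \<omega> * indicator EA \<omega> \<partial>M)" by (rule Bochner_Integration.integral_cong[OF refl]) (simp add: ptw)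
    also have "\<dots> = (\<integral>\<omega>. D1 \<omega> * indicator Pe \<omega> \<partial>M) + (\<integral>\<omega>. D2 \<omega> * indicator Pe \<omega> \<partial>M)
      - (\<integral>\<omega>. Dl \<omega> * indicator EA \<omega> \<partial>M)" using i1 i2 i3 by simp
    finally show ?thesis unfolding cexp_def by (simp add: diff_divide_distrib add_divide_distrib)
  qed
  have cPi: "cexp M X Pi = cexp M D2 Pi"
    unfolding cexp_def by (rule arg_cong[where f="\<lambda>x. x / _"], rule Bochner_Integration.integral_cong[OF refl]) (simp add: ptw2)
  have pt: "cexp M D2 Pe = cexp M D2 Pi"
    using par_trends[OF i t(1) s(1) tne eD] unfolding D2_def Pe_def Pi_def .
  have mu_eq: "?mu = cexp M D1 Pe" by (simp add: mu_g_def D1_def Pe_def)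
  have m_eq: "m_g M g Y E A i (enat e) s t = cexp M X Pe - cexp M X Pi"
    by (simp add: m_g_def X_def Pe_def Pi_def)
  have h_eq: "?h = measure M EA / measure M Pe"
  proof -
    have "{\<omega> \<in> space M. A i s \<omega> \<and> E i \<omega> = enat e} = EA" by (auto simp: EA_def)
    then show ?thesis by (simp add: h_ant_def Pe_def)
  qed
  have tau_eq: "?tau = (\<integral>\<omega>. Dl \<omega> * indicator EA \<omega> \<partial>M) / measure M EA"
    by (simp add: tau_g_def cexp_def Dl_def EA_def)
  have key: "(\<integral>\<omega>. Dl \<omega> * indicator EA \<omega> \<partial>M) / measure M Pe = ?tau * ?h"
  proof (cases "measure M EA = 0")
    case True
    have "EA \<in> null_sets M" using True EA_sets emeasure_eq_measure
      by (simp add: null_sets_def)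
    then have "AE \<omega> in M. \<omega> \<notin> EA" by (rule AE_not_in)
    then have "(\<integral>\<omega>. Dl \<omega> * indicator EA \<omega> \<partial>M) = 0"
      by (intro integral_eq_zero_AE) (auto elim!: eventually_mono)
    then show ?thesis using True by (simp add: tau_eq h_eq)
  next
    case False
    then show ?thesis by (simp add: tau_eq h_eq)
  qed
  have mform: "m_g M g Y E A i (enat e) s t = ?mu - ?h * ?tau"
    using m_eq cPe cPi pt mu_eq key by (simp add: mult.commute)
  have h0: "0 \<le> ?h" and h1: "?h \<le> ?p" using iv by auto
  show ?thesis
  proof (cases "?mu = 0")
    case True
    then have "?tau = 0" using v by simp
    then show ?thesis using True mform by (intro exI[of _ 1]) auto
  next
    case False
    define r where "r = ?tau / ?mu"
    have rb: "\<bar>r\<bar> \<le> 1" using v False by (simp add: r_def abs_divide divide_le_eq_1)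
    have tau_r: "?tau = r * ?mu" using False by (simp add: r_def)
    have sg: "sgn (?tau * ?mu) = sgn r"
      using False by (simp add: tau_r sgn_mult)
    have hr: "\<bar>?h * r\<bar> \<le> ?p"
    proof -
      have "\<bar>?h * r\<bar> = ?h * \<bar>r\<bar>" using h0 by (simp add: abs_mult)
      also have "\<dots> \<le> ?h * 1" using rb h0 by (intro mult_left_mono) auto
      finally show ?thesis using h1 by simp
    qed
    have pos: "0 < 1 - ?h * r" using hr pi_bd by linarith
    have mm: "m_g M g Y E A i (enat e) s t = ?mu * (1 - ?h * r)"
      using mform tau_r by (simp add: algebra_simps)
    define c where "c = 1 / (1 - ?h * r)"
    have mc: "?mu = m_g M g Y E A i (enat e) s t * c"
      using pos by (simp add: mm c_def)
    have bounds: "min 1 (1 / (1 - sgn r * ?p)) \<le> c \<and> c \<le> max 1 (1 / (1 - sgn r * ?p))"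
    proof (cases "r > 0")
      case True
      have "?h * r \<ge> 0" using h0 True by simp
      then have "c \<ge> 1" using pos by (simp add: c_def)
      moreover have "c \<le> 1 / (1 - ?p)" unfolding c_def
        using hr pi_bd pos by (intro divide_left_mono) auto
      ultimately show ?thesis using True by simp
    next
      case False
      show ?thesis
      proof (cases "r = 0")
        case True then show ?thesis by (simp add: c_def)
      next
        case r0: False
        with False have rn: "r < 0" by simp
        have "?h * r \<le> 0" using h0 rn by (simp add: mult_nonneg_nonpos)
        then have "c \<le> 1" using pos by (simp add: c_def)
        moreover have "1 / (1 + ?p) \<le> c" unfolding c_def
          using hr pi_bd pos by (intro divide_left_mono) auto
        ultimately show ?thesis using rn by simp
      qed
    qed
    show ?thesis using bounds mc sg by (intro exI[of _ c]) simp
  qed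
qed

end
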